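(* Let $C$ be the Klein quartic $\{X^3Y+Y^3Z+Z^3X=0\}\subset\mathbb{C}P^2$ with affine coordinates $x=X^3Y^{-2}Z^{-1}+1$, $y=-XY^{-1}$ (so $y^7=x(1-x)^2$). Let $\zeta_7=\exp(2\pi\sqrt{-1}/7)$, $e_0(t)=(t,\sqrt[7]{t(1-t)^2})$, $t\in[0,1]$ (real nonnegative root), $\sigma(x,y)=(x,\zeta_7y)$, and for $k=0,\dots,7$ let $\ell_k$ be the loop $\sigma^{k-1}_\ast(e_0)\cdot\sigma^k_\ast(e_0)^{-1}$ based at $(x,y)=(0,0)$. Let $(h_1,h_2,h_3,h_4)=(1/7,2/7,4/7,1/7)$, $\xi_i=\zeta_7^{7h_i}$, and $\omega_i=\omega'_i/B(h_i,h_{i+1})$ for $i=1,2,3$, where $\omega'_1=(1-x)dx/y^6$, $\omega'_2=(1-x)dx/y^5$, $\omega'_3=dx/y^3$ and $B$ is the beta function. Let $x_{i,j}=\int_{e_0}\omega_i\omega_j$. Then for $i,j\in\{1,2,3\}$ and all $k$, $$\int_{\ell_k}\omega_i\omega_j=(\xi_i\xi_j)^{k-1}(1-\xi_i\xi_j)\,x_{i,j}+(\xi_i\xi_j)^{k-1}(\xi_i\xi_j-\xi_j).$$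
   Context: For a path $\gamma\colon[0,1]\to C$ and $1$-forms $a,b$ with $\gamma^\ast a=f(t)dt$, $\gamma^\ast b=g(t)dt$, Chen's iterated integral is $\int_\gamma ab=\int_{0\le t_1\le t_2\le 1}f(t_1)g(t_2)\,dt_1dt_2$. *)

theory Defs
  imports "HOL-Analysis.Analysis"
begin

text \<open>Points of the affine Klein quartic y^7 = x(1-x)^2 are pairs (x,y) of complex numbers.
  A 1-form a(x,y) dx on the curve is represented by its coefficient function a.\<close>

definition zeta7 :: complex where
  "zeta7 = exp (2 * of_real pi * \<i> / 7)"

definition e0 :: "real \<Rightarrow> complex \<times> complex" where
  "e0 t = (complex_of_real t, complex_of_real (root 7 (t * (1 - t)^2)))"

definition sigma_pow :: "int \<Rightarrow> complex \<times> complex \<Rightarrow> complex \<times> complex" where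
  "sigma_pow m p = (fst p, zeta7 powi m * snd p)"

definition loop_l :: "int \<Rightarrow> real \<Rightarrow> complex \<times> complex" where
  "loop_l k = (sigma_pow (k - 1) \<circ> e0) +++ reversepath (sigma_pow k \<circ> e0)"

definition pullback :: "(real \<Rightarrow> complex \<times> complex) \<Rightarrow> (complex \<times> complex \<Rightarrow> complex) \<Rightarrow> real \<Rightarrow> complex" where
  "pullback g a t = a (g t) * vector_derivative (\<lambda>s. fst (g s)) (at t within {0..1})"

definition iter_int :: "(real \<Rightarrow> complex \<times> complex) \<Rightarrow> (complex \<times> complex \<Rightarrow> complex)
     \<Rightarrow> (complex \<times> complex \<Rightarrow> complex) \<Rightarrow> complex" where
  "iter_int g a b = integral {(t1, t2). 0 \<le> t1 \<and> t1 \<le> t2 \<and> t2 \<le> 1}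
      (\<lambda>(t1, t2). pullback g a t1 * pullback g b t2)"

definition hh :: "nat \<Rightarrow> real" where
  "hh i = (if i = 1 then 1/7 else if i = 2 then 2/7 else if i = 3 then 4/7 else if i = 4 then 1/7 else 0)"

text \<open>xi_i = zeta7^(7 h_i); 7 h_i is a natural number.\<close>
definition xi :: "nat \<Rightarrow> complex" where
  "xi i = zeta7 ^ nat (round (7 * hh i))"

definition omega' :: "nat \<Rightarrow> complex \<times> complex \<Rightarrow> complex" where
  "omega' i p = (if i = 1 then (1 - fst p) / (snd p)^6
                 else if i = 2 then (1 - fst p) / (snd p)^5
                 else if i = 3 then 1 / (snd p)^3 else 0)"

definition omega :: "nat \<Rightarrow> complex \<times> complex \<Rightarrow> complex" where
  "omega i p = omega' i p / complex_of_real (Beta (hh i) (hh (i + 1)))"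

definition xx :: "nat \<Rightarrow> nat \<Rightarrow> complex" where
  "xx i j = iter_int e0 (omega i) (omega j)"

end

theory Submission
  imports Defs
begin
lemma t1: fixes c :: complex assumes c7: "c^7 = 1" shows "inverse (c^6) = c"
proof (rule inverse_unique)
  have "c^6 * c = c^7" by (simp add: power_Suc2[symmetric] del: power_Suc2)
  then show "c^6 * c = 1" using c7 by simp
qed
lemma t2: fixes c :: complex assumes c7: "c^7 = 1" shows "inverse (c^5) = c^2"
proof (rule inverse_unique)
  have "c^5 * c^2 = c^7" by (simp add: power_add[symmetric] del: power_Suc2)
  then show "c^5 * c^2 = 1" using c7 by simp
qed
lemma t3: fixes c :: complex assumes c7: "c^7 = 1" shows "inverse (c^3) = c^4"
proof (rule inverse_unique)
  have "c^3 * c^4 = c^7" by (simp add: power_add[symmetric] del: power_Suc2)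
  then show "c^3 * c^4 = 1" using c7 by simp
qed

lemma zeta7_7: "zeta7 ^ 7 = 1"
proof -
  have "zeta7 ^ 7 = exp (of_nat 7 * (2 * of_real pi * \<i> / 7))"
    unfolding zeta7_def by (rule exp_of_nat_mult[symmetric])
  also have "\<dots> = 1" using exp_two_pi_i by (simp add: mult_ac)
  finally show ?thesis .
qed

lemma zeta7_nz: "zeta7 \<noteq> 0" by (simp add: zeta7_def)

lemma xi_vals: "xi 1 = zeta7" "xi 2 = zeta7^2" "xi 3 = zeta7^4"
  by (simp_all add: xi_def hh_def)

lemma c7: "(zeta7 powi m)^7 = 1"
proof -
  have "(zeta7 powi m)^7 = (zeta7^7) powi m"
    by (simp add: power_int_power' power_int_power mult.commute)
  then show ?thesis by (simp add: zeta7_7)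
qed

lemma omega_sigma: assumes "a \<in> {1,2,3}"
  shows "omega a (sigma_pow m p) = xi a powi m * omega a p"
proof -
  define c where "c = zeta7 powi m"
  have c7: "c ^ 7 = 1" unfolding c_def by (rule c7)
  note i6 = t1[OF c7] and i5 = t2[OF c7] and i3 = t3[OF c7]
  have x: "xi 1 powi m = c" "xi 2 powi m = c^2" "xi 3 powi m = c^4"
    by (subst xi_vals; simp add: c_def power_int_power power_int_power' mult.commute)+
  obtain x y where p: "p = (x,y)" by (cases p)
  have sp: "sigma_pow m (x,y) = (x, c*y)" by (simp add: sigma_pow_def c_def)
  have "omega' a (sigma_pow m p) = xi a powi m * omega' a p"
  proof -
    have "a = 1 \<or> a = 2 \<or> a = 3" using assms by auto
    moreover have o1: "omega' 1 (x, c*y) = c * omega' 1 (x,y)"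
      unfolding omega'_def by (simp add: power_mult_distrib divide_inverse inverse_mult_distrib i6)
    moreover have o2: "omega' 2 (x, c*y) = c^2 * omega' 2 (x,y)"
      unfolding omega'_def by (simp add: power_mult_distrib divide_inverse inverse_mult_distrib i5)
    moreover have o3: "omega' 3 (x, c*y) = c^4 * omega' 3 (x,y)"
      unfolding omega'_def by (simp add: power_mult_distrib divide_inverse inverse_mult_distrib i3)
    ultimately show ?thesis unfolding p sp by (elim disjE; hypsubst; simp only: x o1 o2 o3)
  qed
  then show ?thesis by (simp add: omega_def)
qed

definition ua :: "nat \<Rightarrow> real \<Rightarrow> real" where
  "ua a s = s powr (hh a - 1) * (1 - s) powr (hh (a+1) - 1) / Beta (hh a) (hh (a+1))"

lemma key: fixes s :: real assumes "0 < s" "s < 1"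
  shows "(1-s)^n / (root 7 (s*(1-s)^2))^q = s powr (-(q/7)) * (1-s) powr (n - 2*q/7)"
proof -
  have p: "s*(1-s)^2 > 0" using assms by simp
  have r: "root 7 (s*(1-s)^2) = exp((ln s + 2*ln(1-s))/7)"
    using assms p by (simp add: root_powr_inverse powr_def ln_mult ln_realpow)
  have rq: "(root 7 (s*(1-s)^2))^q = exp(q*((ln s + 2*ln(1-s))/7))"
    unfolding r by (rule exp_of_nat_mult[symmetric])
  have n: "(1-s)^n = exp(n * ln(1-s))"
    using assms by (simp add: exp_of_nat_mult)
  have rhs: "s powr (-(q/7)) * (1-s) powr (n - 2*q/7) = exp((-(q/7)) * ln s) * exp((n - 2*q/7) * ln (1-s))"
    using assms by (simp add: powr_def)
  have "(1-s)^n / (root 7 (s*(1-s)^2))^q = exp(n * ln(1-s) - q*((ln s + 2*ln(1-s))/7))"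
    unfolding rq n by (simp add: exp_diff)
  also have "\<dots> = exp((-(q/7)) * ln s) * exp((n - 2*q/7) * ln (1-s))"
    unfolding exp_add[symmetric] by (rule arg_cong[where f=exp]) (simp add: field_simps)
  finally show ?thesis using rhs by simp
qed

lemma omega_e0: assumes "a \<in> {1,2,3}" "0 < s" "s < 1"
  shows "omega a (e0 s) = of_real (ua a s)"
proof -
  define r where "r = root 7 (s*(1-s)^2)"
  define B where "B = Beta (hh a) (hh (a+1))"
  have e: "e0 s = (of_real s, of_real r)" by (simp add: e0_def r_def)
  have "omega' a (e0 s) = of_real (s powr (hh a - 1) * (1 - s) powr (hh (a+1) - 1))"
  proof -
    have "a = 1 \<or> a = 2 \<or> a = 3" using assms by auto
    moreover have "omega' 1 (e0 s) = of_real (s powr (hh 1 - 1) * (1 - s) powr (hh (1+1) - 1))"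
    proof -
      have "omega' 1 (e0 s) = of_real ((1-s)^1 / r^6)" by (simp add: omega'_def e)
      also have "(1-s)^1 / r^6 = s powr (hh 1 - 1) * (1 - s) powr (hh (1+1) - 1)"
        unfolding r_def key[OF assms(2,3)] by (simp add: hh_def)
      finally show ?thesis .
    qed
    moreover have "omega' 2 (e0 s) = of_real (s powr (hh 2 - 1) * (1 - s) powr (hh (2+1) - 1))"
    proof -
      have "omega' 2 (e0 s) = of_real ((1-s)^1 / r^5)" by (simp add: omega'_def e)
      also have "(1-s)^1 / r^5 = s powr (hh 2 - 1) * (1 - s) powr (hh (2+1) - 1)"
        unfolding r_def key[OF assms(2,3)] by (simp add: hh_def)
      finally show ?thesis .
    qed
    moreover have "omega' 3 (e0 s) = of_real (s powr (hh 3 - 1) * (1 - s) powr (hh (3+1) - 1))"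
    proof -
      have "omega' 3 (e0 s) = of_real ((1-s)^0 / r^3)" by (simp add: omega'_def e)
      also have "(1-s)^0 / r^3 = s powr (hh 3 - 1) * (1 - s) powr (hh (3+1) - 1)"
        unfolding r_def key[OF assms(2,3)] by (simp add: hh_def)
      finally show ?thesis .
    qed
    ultimately show ?thesis by (metis (no_types))
  qed
  then show ?thesis by (simp add: omega_def ua_def)
qed

lemma prod_int: fixes f g :: "real \<Rightarrow> real"
  assumes f: "integrable lborel f" and g: "integrable lborel g"
  shows "integrable lborel (\<lambda>x::real\<times>real. f (fst x) * g (snd x))"
    "integral\<^sup>L lborel (\<lambda>x::real\<times>real. f (fst x) * g (snd x)) = integral\<^sup>L lborel f * integral\<^sup>L lborel g"
proof -
  have [measurable]: "f \<in> borel_measurable lborel" "g \<in> borel_measurable lborel"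
    using f g by (auto intro: borel_measurable_integrable)
  have i: "integrable (lborel \<Otimes>\<^sub>M lborel) (\<lambda>x::real\<times>real. f (fst x) * g (snd x))"
  proof (rule lborel_pair.Fubini_integrable)
    show "(\<lambda>x::real\<times>real. f (fst x) * g (snd x)) \<in> borel_measurable (lborel \<Otimes>\<^sub>M lborel)"
      by measurable
    show "integrable lborel (\<lambda>x. \<integral>y. norm (f (fst (x,y)) * g (snd (x,y))) \<partial>lborel)"
      using f g by (simp add: abs_mult)
    show "AE x in lborel. integrable lborel (\<lambda>y. f (fst (x,y)) * g (snd (x,y)))"
      using g by simp
  qed
  then show "integrable lborel (\<lambda>x::real\<times>real. f (fst x) * g (snd x))"
    by (simp only: lborel_prod)
  have "integral\<^sup>L (lborel \<Otimes>\<^sub>M lborel) (\<lambda>x::real\<times>real. f (fst x) * g (snd x))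
      = (\<integral>x. (\<integral>y. f (fst (x,y)) * g (snd (x,y)) \<partial>lborel) \<partial>lborel)"
    using lborel_pair.integral_fst'[OF i] by simp
  also have "\<dots> = integral\<^sup>L lborel f * integral\<^sup>L lborel g" by simp
  finally show "integral\<^sup>L lborel (\<lambda>x::real\<times>real. f (fst x) * g (snd x)) = integral\<^sup>L lborel f * integral\<^sup>L lborel g"
    by (simp only: lborel_prod)
qed

definition TT :: "(real \<times> real) set" where "TT = {(t1, t2). 0 \<le> t1 \<and> t1 \<le> t2 \<and> t2 \<le> 1}"
definition TT' :: "(real \<times> real) set" where "TT' = {(t1, t2). 0 \<le> t2 \<and> t2 \<le> t1 \<and> t1 \<le> 1}"

lemma closed_le2: "closed {x::real\<times>real. fst x \<le> snd x}" "closed {x::real\<times>real. c \<le> fst x}"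
  "closed {x::real\<times>real. snd x \<le> c}" "closed {x::real\<times>real. c \<le> snd x}" "closed {x::real\<times>real. fst x \<le> c}"
  by (intro closed_Collect_le continuous_intros)+

lemma TT_borel: "TT \<in> sets lborel" "TT' \<in> sets lborel"
proof -
  have "TT = {x::real\<times>real. 0 \<le> fst x} \<inter> {x. fst x \<le> snd x} \<inter> {x. snd x \<le> 1}"
     by (auto simp: TT_def)
  then have "closed TT" using closed_le2 by (metis closed_Int)
  then show "TT \<in> sets lborel" by simp
  have "TT' = {x::real\<times>real. 0 \<le> snd x} \<inter> {x. snd x \<le> fst x} \<inter> {x. fst x \<le> 1}"
     by (auto simp: TT'_def)
  moreover have "closed {x::real\<times>real. snd x \<le> fst x}" by (intro closed_Collect_le continuous_intros)
  ultimately have "closed TT'" using closed_le2 by (metis closed_Int)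
  then show "TT' \<in> sets lborel" by simp
qed

lemma diag_negl: "negligible {x::real\<times>real. fst x = snd x}"
proof -
  have "negligible {x::real\<times>real. (1::real,-1::real) \<bullet> x = 0}" by (rule negligible_hyperplane) (simp add: zero_prod_def)
  moreover have "{x::real\<times>real. (1::real,-1::real) \<bullet> x = 0} = {x::real\<times>real. fst x = snd x}"
    by (auto simp: inner_Pair_0 inner_prod_def)
  ultimately show ?thesis by simp
qed

lemma line_negl: "negligible {x::real\<times>real. fst x = c}" "negligible {x::real\<times>real. snd x = c}"
proof -
  have "negligible {x::real\<times>real. (1::real,0::real) \<bullet> x = c}" by (rule negligible_hyperplane) (simp add: zero_prod_def)
  moreover have "{x::real\<times>real. (1::real,0::real) \<bullet> x = c} = {x::real\<times>real. fst x = c}"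
    by (auto simp: inner_prod_def)
  ultimately show "negligible {x::real\<times>real. fst x = c}" by simp
  have "negligible {x::real\<times>real. (0::real,1::real) \<bullet> x = c}" by (rule negligible_hyperplane) (simp add: zero_prod_def)
  moreover have "{x::real\<times>real. (0::real,1::real) \<bullet> x = c} = {x::real\<times>real. snd x = c}"
    by (auto simp: inner_prod_def)
  ultimately show "negligible {x::real\<times>real. snd x = c}" by simp
qed

lemma pieces:
  fixes W1 W2 :: "real \<Rightarrow> real"
  assumes i1: "integrable lborel W1" and i2: "integrable lborel W2"
    and v1: "integral\<^sup>L lborel W1 = 1" and v2: "integral\<^sup>L lborel W2 = 1"
    and z1: "\<And>s. s \<notin> {0..1} \<Longrightarrow> W1 s = 0" and z2: "\<And>s. s \<notin> {0..1} \<Longrightarrow> W2 s = 0"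
  defines "Q \<equiv> (\<lambda>x::real\<times>real. W1 (fst x) * W2 (snd x))"
  defines "R \<equiv> integral TT Q"
  shows "(Q has_integral R) TT"
    "(Q has_integral (1 - R)) TT'"
proof -
  have Qi: "integrable lborel Q" and Qv: "integral\<^sup>L lborel Q = 1"
    using prod_int[OF i1 i2] v1 v2 unfolding Q_def by auto
  have QU: "(Q has_integral 1) UNIV" using has_integral_integral_lborel[OF Qi] Qv by simp
  have Qbox: "(Q has_integral 1) (cbox (0,0) (1,1))"
  proof -
    have "(\<lambda>x. if x \<in> cbox (0,0) (1,1) then Q x else 0) = Q"
      using z1 z2 by (auto simp: Q_def fun_eq_iff cbox_Pair_iff)
    then show ?thesis using QU has_integral_restrict_UNIV by metis
  qed
  have sT: "set_integrable lborel TT Q" "set_integrable lborel TT' Q"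
    unfolding set_integrable_def
    by (rule integrable_mult_indicator[OF TT_borel(1) Qi], rule integrable_mult_indicator[OF TT_borel(2) Qi])
  show "(Q has_integral R) TT" unfolding R_def
    using set_borel_integral_eq_integral(1)[OF sT(1)] by (simp add: has_integral_integral)
  moreover have "(Q has_integral (integral TT' Q)) TT'"
    using set_borel_integral_eq_integral(1)[OF sT(2)] by (simp add: has_integral_integral)
  ultimately have "(Q has_integral (R + integral TT' Q)) (TT \<union> TT')"
    by (rule has_integral_Un) (rule negligible_subset[OF diag_negl], auto simp: TT_def TT'_def)
  moreover have "TT \<union> TT' = cbox (0,0) (1,1)" by (auto simp: TT_def TT'_def cbox_Pair_iff)
  ultimately have "R + integral TT' Q = 1" using Qbox has_integral_unique by metis
  then have "integral TT' Q = 1 - R" by linarith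
  then show "(Q has_integral (1 - R)) TT'"
    using \<open>(Q has_integral (integral TT' Q)) TT'\<close> by simp
qed

definition T1 :: "(real \<times> real) set" where "T1 = {(s, t). 0 \<le> s \<and> s \<le> t \<and> t \<le> 1/2}"
definition T3 :: "(real \<times> real) set" where "T3 = {(s, t). 1/2 \<le> s \<and> s \<le> t \<and> t \<le> 1}"
definition SQ :: "(real \<times> real) set" where "SQ = {0..1/2} \<times> {1/2..1}"

lemma scale_piece: fixes Q :: "real \<times> real \<Rightarrow> real"
  assumes "(Q has_integral R) TT"
  shows "((\<lambda>x. 4 * Q (2 *\<^sub>R x)) has_integral R) T1"
proof -
  have sub: "TT \<subseteq> cbox (0,0) (1,1)" by (auto simp: TT_def cbox_Pair_iff)
  have h1: "((\<lambda>x. if x \<in> TT then Q x else 0) has_integral R) (cbox (0,0) (1,1))"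
    unfolding has_integral_restrict[OF sub] by (rule assms)
  have h2: "((\<lambda>x. (\<lambda>x. if x \<in> TT then Q x else 0) (2 *\<^sub>R x + 0)) has_integral (R /\<^sub>R 2 ^ DIM(real\<times>real)))
     (cbox (((0,0) - 0) /\<^sub>R 2) (((1,1) - 0) /\<^sub>R 2))"
    by (rule has_integral_affinity'[OF h1]) simp
  have h3: "((\<lambda>x. 4 * (\<lambda>x. if x \<in> TT then Q x else 0) (2 *\<^sub>R x + 0)) has_integral (4 * (R /\<^sub>R 2 ^ DIM(real\<times>real))))
     (cbox (((0,0) - 0) /\<^sub>R 2) (((1,1) - 0) /\<^sub>R 2))"
    by (rule has_integral_mult_right[OF h2])
  have e1: "(\<lambda>x. 4 * (\<lambda>x. if x \<in> TT then Q x else 0) (2 *\<^sub>R x + 0)) = (\<lambda>x. if x \<in> T1 then 4 * Q (2 *\<^sub>R x) else 0)"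
    by (auto simp: fun_eq_iff TT_def T1_def)
  have e2: "4 * (R /\<^sub>R 2 ^ DIM(real\<times>real)) = R" by simp
  have e3: "cbox (((0,0) - 0) /\<^sub>R 2) (((1,1) - 0) /\<^sub>R 2) = cbox (0::real,0::real) (1/2,1/2)" by simp
  have sub1: "T1 \<subseteq> cbox (0::real,0::real) (1/2,1/2)" by (auto simp: T1_def cbox_Pair_iff)
  show ?thesis using h3 unfolding e1 e2 e3 has_integral_restrict[OF sub1] .
qed

lemma refl_piece: fixes Q :: "real \<times> real \<Rightarrow> real"
  assumes "(Q has_integral R) TT'"
  shows "((\<lambda>x. 4 * Q ((2,2) - 2 *\<^sub>R x)) has_integral R) T3"
proof -
  have sub: "TT' \<subseteq> cbox (0,0) (1,1)" by (auto simp: TT'_def cbox_Pair_iff)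
  have h1: "((\<lambda>x. if x \<in> TT' then Q x else 0) has_integral R) (cbox (0,0) (1,1))"
    unfolding has_integral_restrict[OF sub] by (rule assms)
  have h1': "((\<lambda>x. (\<lambda>x. if x \<in> TT' then Q x else 0) (-x)) has_integral R) (cbox (-(1,1)) (-(0,0)))"
    by (rule has_integral_reflect_lemma[OF h1])
  have h2: "((\<lambda>x. (\<lambda>x. (\<lambda>x. if x \<in> TT' then Q x else 0) (-x)) (2 *\<^sub>R x + (-2,-2))) has_integral (R /\<^sub>R 2 ^ DIM(real\<times>real)))
     (cbox ((-(1,1) - (-2,-2)) /\<^sub>R 2) ((-(0,0) - (-2,-2)) /\<^sub>R 2))"
    by (rule has_integral_affinity'[OF h1']) simp
  note h3 = has_integral_mult_right[OF h2, of 4]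
  have e1: "(\<lambda>x. 4 * (\<lambda>x. (\<lambda>x. if x \<in> TT' then Q x else 0) (-x)) (2 *\<^sub>R x + (-2,-2))) = (\<lambda>x. if x \<in> T3 then 4 * Q ((2,2) - 2 *\<^sub>R x) else 0)"
    by (auto simp: fun_eq_iff TT'_def T3_def)
  have e2: "4 * (R /\<^sub>R 2 ^ DIM(real\<times>real)) = R" by simp
  have e3: "cbox ((-(1,1) - (-2,-2)) /\<^sub>R 2) ((-(0,0) - (-2,-2)) /\<^sub>R 2) = cbox (1/2::real,1/2::real) (1,1)" by simp
  have sub1: "T3 \<subseteq> cbox (1/2::real,1/2::real) (1,1)" by (auto simp: T3_def cbox_Pair_iff)
  show ?thesis using h3 unfolding e1 e2 e3 has_integral_restrict[OF sub1] .
qed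

lemma sq_piece:
  fixes W1 W2 :: "real \<Rightarrow> real"
  assumes i1: "integrable lborel W1" and i2: "integrable lborel W2"
    and v1: "integral\<^sup>L lborel W1 = 1" and v2: "integral\<^sup>L lborel W2 = 1"
    and z1: "\<And>s. s \<notin> {0..1} \<Longrightarrow> W1 s = 0" and z2: "\<And>s. s \<notin> {0..1} \<Longrightarrow> W2 s = 0"
  shows "((\<lambda>x. 4 * (W1 (2 * fst x) * W2 (2 - 2 * snd x))) has_integral 1) SQ"
proof -
  define f1 where "f1 = (\<lambda>s. W1 (0 + 2 * s))"
  define g1 where "g1 = (\<lambda>s. W2 (2 + (-2) * s))"
  have if1: "integrable lborel f1" unfolding f1_def by (rule lborel_integrable_real_affine[OF i1]) simp
  have ig1: "integrable lborel g1" unfolding g1_def by (rule lborel_integrable_real_affine[OF i2]) simp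
  have vf1: "integral\<^sup>L lborel f1 = 1/2"
    using lborel_integral_real_affine[of 2 W1 0] v1 unfolding f1_def by simp
  have vg1: "integral\<^sup>L lborel g1 = 1/2"
    using lborel_integral_real_affine[of "-2" W2 2] v2 unfolding g1_def by simp
  have U: "((\<lambda>x. f1 (fst x) * g1 (snd x)) has_integral (1/4)) UNIV"
    using has_integral_integral_lborel[OF prod_int(1)[OF if1 ig1]] prod_int(2)[OF if1 ig1] vf1 vg1 by simp
  note U4 = has_integral_mult_right[OF U, of 4]
  have e: "(\<lambda>x. 4 * (f1 (fst x) * g1 (snd x))) = (\<lambda>x. if x \<in> SQ then 4 * (W1 (2 * fst x) * W2 (2 - 2 * snd x)) else 0)"
  proof
    fix x :: "real \<times> real"
    show "4 * (f1 (fst x) * g1 (snd x)) = (if x \<in> SQ then 4 * (W1 (2 * fst x) * W2 (2 - 2 * snd x)) else 0)"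
    proof (cases "x \<in> SQ")
      case True then show ?thesis by (simp add: f1_def g1_def)
    next
      case False
      then have "2 * fst x \<notin> {0..1} \<or> 2 + (-2) * snd x \<notin> {0..1}" by (auto simp: SQ_def mem_Times_iff)
      then show ?thesis using False z1 z2 by (auto simp: f1_def g1_def)
    qed
  qed
  show ?thesis using U4 unfolding e has_integral_restrict_UNIV by simp
qed

definition W :: "nat \<Rightarrow> real \<Rightarrow> real" where
  "W a s = indicator {0..1} s * ua a s"

lemma hh_pos: "a \<in> {1,2,3} \<Longrightarrow> hh a > 0 \<and> hh (a+1) > 0"
  by (auto simp: hh_def)

lemma Beta_pos: "(x::real) > 0 \<Longrightarrow> y > 0 \<Longrightarrow> Beta x y > 0"
  using Gamma_real_pos[of x] Gamma_real_pos[of y] Gamma_real_pos[of "x+y"] by (simp add: Beta_def)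

lemma W_int: assumes "a \<in> {1,2,3}"
  shows "integrable lborel (W a)" "integral\<^sup>L lborel (W a) = 1"
proof -
  have p: "hh a > 0" "hh (a+1) > 0" using hh_pos[OF assms] by auto
  have B: "Beta (hh a) (hh (a+1)) > 0" using Beta_pos p by auto
  note I = integrable_Beta[OF p]
  have eq: "W a = (\<lambda>t. (indicator {0..1} t *\<^sub>R (t powr (hh a - 1) * (1 - t) powr (hh (a+1) - 1))) / Beta (hh a) (hh (a+1)))"
    by (auto simp: W_def ua_def fun_eq_iff)
  show "integrable lborel (W a)" unfolding eq
    using I unfolding set_integrable_def by (intro integrable_divide_zero) 
  have "(LINT t:{0..1}|lborel. t powr (hh a - 1) * (1 - t) powr (hh (a+1) - 1)) = Beta (hh a) (hh (a+1))"
    using set_borel_integral_eq_integral(2)[OF I] has_integral_Beta_real[OF p] integral_unique by metis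
  then show "integral\<^sup>L lborel (W a) = 1" unfolding eq set_lebesgue_integral_def using B by simp
qed

lemma W_zero: "s \<notin> {0..1} \<Longrightarrow> W a s = 0" by (simp add: W_def)

lemma deriv_e0: assumes "t \<in> {0..1}"
  shows "vector_derivative (\<lambda>s. fst (e0 s)) (at t within {0..1}) = 1"
proof -
  have "((\<lambda>s. complex_of_real s) has_vector_derivative of_real 1) (at t within cbox 0 1)"
    by (intro derivative_eq_intros) auto
  then have "vector_derivative (\<lambda>s. complex_of_real s) (at t within cbox 0 1) = 1"
    using assms by (intro vector_derivative_within_cbox) auto
  moreover have "(\<lambda>s. fst (e0 s)) = (\<lambda>s. complex_of_real s)" by (simp add: e0_def fun_eq_iff)
  ultimately show ?thesis by simp
qed

lemma loop_fst: "fst (loop_l k t) = of_real (if t \<le> 1/2 then 2*t else 2 - 2*t)"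
  by (simp add: loop_l_def joinpaths_def reversepath_def sigma_pow_def e0_def)

lemma loop_val1: "t \<le> 1/2 \<Longrightarrow> loop_l k t = sigma_pow (k-1) (e0 (2*t))"
  by (simp add: loop_l_def joinpaths_def)

lemma loop_val2: "t > 1/2 \<Longrightarrow> loop_l k t = sigma_pow k (e0 (2 - 2*t))"
  by (simp add: loop_l_def joinpaths_def reversepath_def algebra_simps)

lemma deriv_loop1: assumes "0 < t" "t < 1/2"
  shows "vector_derivative (\<lambda>s. fst (loop_l k s)) (at t within {0..1}) = 2"
proof -
  have d: "((\<lambda>s. complex_of_real (2 * s)) has_vector_derivative of_real 2) (at t)"
    by (intro derivative_eq_intros) auto
  have "((\<lambda>s. fst (loop_l k s)) has_vector_derivative of_real 2) (at t)"
    by (rule has_vector_derivative_transform_within_open[OF d, of "{..<1/2}"]) (use assms in \<open>auto simp: loop_fst\<close>)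
  then have "((\<lambda>s. fst (loop_l k s)) has_vector_derivative of_real 2) (at t within cbox 0 1)"
    by (rule has_vector_derivative_at_within)
  then have "vector_derivative (\<lambda>s. fst (loop_l k s)) (at t within cbox 0 1) = 2"
    using assms by (intro vector_derivative_within_cbox) auto
  then show ?thesis by simp
qed

lemma deriv_loop2: assumes "1/2 < t" "t < 1"
  shows "vector_derivative (\<lambda>s. fst (loop_l k s)) (at t within {0..1}) = -2"
proof -
  have d: "((\<lambda>s. complex_of_real (2 - 2 * s)) has_vector_derivative of_real (-2)) (at t)"
    by (intro derivative_eq_intros) auto
  have "((\<lambda>s. fst (loop_l k s)) has_vector_derivative of_real (-2)) (at t)"
    by (rule has_vector_derivative_transform_within_open[OF d, of "{1/2<..}"]) (use assms in \<open>auto simp: loop_fst\<close>)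
  then have "((\<lambda>s. fst (loop_l k s)) has_vector_derivative of_real (-2)) (at t within cbox 0 1)"
    by (rule has_vector_derivative_at_within)
  then have "vector_derivative (\<lambda>s. fst (loop_l k s)) (at t within cbox 0 1) = -2"
    using assms by (intro vector_derivative_within_cbox) auto
  then show ?thesis by simp
qed

lemma PB_e0: assumes "a \<in> {1,2,3}" "0 < t" "t < 1"
  shows "pullback e0 (omega a) t = of_real (W a t)"
  using assms by (simp add: pullback_def deriv_e0 omega_e0 W_def)

lemma PB_l1: assumes "a \<in> {1,2,3}" "0 < t" "t < 1/2"
  shows "pullback (loop_l k) (omega a) t = xi a powi (k-1) * of_real (2 * W a (2*t))"
  using assms by (simp add: pullback_def deriv_loop1 loop_val1 omega_sigma omega_e0 W_def)

lemma PB_l2: assumes "a \<in> {1,2,3}" "1/2 < t" "t < 1"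
  shows "pullback (loop_l k) (omega a) t = xi a powi k * of_real (-2 * W a (2 - 2*t))"
  using assms by (simp add: pullback_def deriv_loop2 loop_val2 omega_sigma omega_e0 W_def)

definition NN :: "(real \<times> real) set" where
  "NN = {x. fst x = 0} \<union> {x. fst x = 1/2} \<union> {x. fst x = 1} \<union> {x. snd x = 0} \<union> {x. snd x = 1/2} \<union> {x. snd x = 1}"

lemma NN_negl: "negligible NN"
  unfolding NN_def by (intro negligible_Un line_negl)

lemma xx_val: assumes "i \<in> {1,2,3}" "j \<in> {1,2,3}"
  shows "((\<lambda>(t1, t2). pullback e0 (omega i) t1 * pullback e0 (omega j) t2) has_integral
          of_real (integral TT (\<lambda>x. W i (fst x) * W j (snd x)))) TT"
proof -
  have h: "((\<lambda>x. W i (fst x) * W j (snd x)) has_integral integral TT (\<lambda>x. W i (fst x) * W j (snd x))) TT"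
    using pieces(1)[OF W_int(1)[OF assms(1)] W_int(1)[OF assms(2)] W_int(2)[OF assms(1)] W_int(2)[OF assms(2)] W_zero W_zero] .
  show ?thesis
  proof (rule has_integral_spike[OF NN_negl _ has_integral_of_real[OF h]])
    fix x assume x: "x \<in> TT - NN"
    obtain s t where st: "x = (s,t)" by (cases x)
    have "0 < s" "s < 1" "0 < t" "t < 1" using x unfolding st by (auto simp: TT_def NN_def)
    then show "(\<lambda>(t1, t2). pullback e0 (omega i) t1 * pullback e0 (omega j) t2) x = of_real (W i (fst x) * W j (snd x))"
      unfolding st using assms by (simp add: PB_e0)
  qed
qed

lemma loop_val: assumes ij: "i \<in> {1,2,3}" "j \<in> {1,2,3}"
  defines "R \<equiv> integral TT (\<lambda>x. W i (fst x) * W j (snd x))"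
  shows "((\<lambda>(t1, t2). pullback (loop_l k) (omega i) t1 * pullback (loop_l k) (omega j) t2) has_integral
          (xi i powi (k-1) * xi j powi (k-1)) * of_real R - xi i powi (k-1) * xi j powi k
          + (xi i powi k * xi j powi k) * of_real (1 - R)) TT"
proof -
  define Q where "Q = (\<lambda>x::real\<times>real. W i (fst x) * W j (snd x))"
  define H where "H = (\<lambda>(t1, t2). pullback (loop_l k) (omega i) t1 * pullback (loop_l k) (omega j) t2)"
  define c1 where "c1 = xi i powi (k-1) * xi j powi (k-1)"
  define c2 where "c2 = - (xi i powi (k-1) * xi j powi k)"
  define c3 where "c3 = xi i powi k * xi j powi k"
  note P = pieces[OF W_int(1)[OF ij(1)] W_int(1)[OF ij(2)] W_int(2)[OF ij(1)] W_int(2)[OF ij(2)] W_zero W_zero]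
  have hQ: "(Q has_integral R) TT" using P(1) unfolding Q_def R_def .
  have hQ': "(Q has_integral (1 - R)) TT'" using P(2) unfolding Q_def R_def .
  have h1: "((\<lambda>x. c1 * of_real (4 * Q (2 *\<^sub>R x))) has_integral (c1 * of_real R)) T1"
    by (rule has_integral_mult_right, rule has_integral_of_real, rule scale_piece[OF hQ])
  have h2: "((\<lambda>x. c2 * of_real (4 * (W i (2 * fst x) * W j (2 - 2 * snd x)))) has_integral (c2 * of_real 1)) SQ"
    by (rule has_integral_mult_right, rule has_integral_of_real,
        rule sq_piece[OF W_int(1)[OF ij(1)] W_int(1)[OF ij(2)] W_int(2)[OF ij(1)] W_int(2)[OF ij(2)] W_zero W_zero])
  have h3: "((\<lambda>x. c3 * of_real (4 * Q ((2,2) - 2 *\<^sub>R x))) has_integral (c3 * of_real (1 - R))) T3"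
    by (rule has_integral_mult_right, rule has_integral_of_real, rule refl_piece[OF hQ'])
  have g1: "(H has_integral (c1 * of_real R)) T1"
  proof (rule has_integral_spike[OF NN_negl _ h1])
    fix x assume x: "x \<in> T1 - NN"
    obtain s t where st: "x = (s,t)" by (cases x)
    have "0 < s" "s < 1/2" "0 < t" "t < 1/2" using x unfolding st by (auto simp: T1_def NN_def)
    then show "H x = c1 * of_real (4 * Q (2 *\<^sub>R x))"
      unfolding st H_def Q_def c1_def using ij by (simp add: PB_l1 mult_ac)
  qed
  have g2: "(H has_integral (c2 * of_real 1)) SQ"
  proof (rule has_integral_spike[OF NN_negl _ h2])
    fix x assume x: "x \<in> SQ - NN"
    obtain s t where st: "x = (s,t)" by (cases x)
    have "0 < s" "s < 1/2" "1/2 < t" "t < 1" using x unfolding st by (auto simp: SQ_def NN_def)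
    then show "H x = c2 * of_real (4 * (W i (2 * fst x) * W j (2 - 2 * snd x)))"
      unfolding st H_def c2_def using ij by (simp add: PB_l1 PB_l2 mult_ac)
  qed
  have g3: "(H has_integral (c3 * of_real (1 - R))) T3"
  proof (rule has_integral_spike[OF NN_negl _ h3])
    fix x assume x: "x \<in> T3 - NN"
    obtain s t where st: "x = (s,t)" by (cases x)
    have "1/2 < s" "s < 1" "1/2 < t" "t < 1" using x unfolding st by (auto simp: T3_def NN_def)
    then show "H x = c3 * of_real (4 * Q ((2,2) - 2 *\<^sub>R x))"
      unfolding st H_def Q_def c3_def using ij by (simp add: PB_l2 mult_ac)
  qed
  have g12: "(H has_integral (c1 * of_real R + c2 * of_real 1)) (T1 \<union> SQ)"
    by (rule has_integral_Un[OF g1 g2], rule negligible_subset[OF line_negl(2)[of "1/2"]])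
       (auto simp: T1_def SQ_def)
  have g123: "(H has_integral (c1 * of_real R + c2 * of_real 1 + c3 * of_real (1 - R))) (T1 \<union> SQ \<union> T3)"
    by (rule has_integral_Un[OF g12 g3], rule negligible_subset[OF line_negl(1)[of "1/2"]])
       (auto simp: T1_def SQ_def T3_def)
  have "T1 \<union> SQ \<union> T3 = TT" by (auto simp: T1_def SQ_def T3_def TT_def)
  then show ?thesis using g123 unfolding H_def c1_def c2_def c3_def by simp
qed

theorem lemma4p5:
  fixes i j :: nat and k :: int
  assumes "i \<in> {1,2,3}" and "j \<in> {1,2,3}" and "0 \<le> k" and "k \<le> 7"
  shows "iter_int (loop_l k) (omega i) (omega j)
       = (xi i * xi j) powi (k - 1) * (1 - xi i * xi j) * xx i j
         + (xi i * xi j) powi (k - 1) * (xi i * xi j - xi j)"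
proof -
  define R where "R = integral TT (\<lambda>x. W i (fst x) * W j (snd x))"
  have set: "{(t1, t2). 0 \<le> t1 \<and> t1 \<le> t2 \<and> t2 \<le> (1::real)} = TT" by (simp add: TT_def)
  have xx: "xx i j = of_real R"
    unfolding xx_def iter_int_def set R_def by (rule integral_unique[OF xx_val[OF assms(1,2)]])
  have lp: "iter_int (loop_l k) (omega i) (omega j) =
     (xi i powi (k-1) * xi j powi (k-1)) * of_real R - xi i powi (k-1) * xi j powi k
          + (xi i powi k * xi j powi k) * of_real (1 - R)"
    unfolding iter_int_def set R_def by (rule integral_unique[OF loop_val[OF assms(1,2)]])
  have nz: "xi i \<noteq> 0" "xi j \<noteq> 0" by (simp_all add: xi_def zeta7_nz)
  have pk: "xi i powi k = xi i powi (k-1) * xi i" "xi j powi k = xi j powi (k-1) * xi j"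
    using power_int_minus_mult nz by metis+
  show ?thesis unfolding lp xx pk power_int_mult_distrib
    by (simp add: algebra_simps)
qed

end
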